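(* Let $\mu$ be a partition of $k$. Then, as functions on Young diagrams, $\mathrm{Ko}^{(\alpha)}_\mu=\sum_{\nu\vdash k}\frac{L_{\nu,\mu}}{z_\nu}\,\mathrm{Ch}^{(\alpha)}_\nu .$ In particular $\mathrm{Ko}^{(\alpha)}_\mu$ is an $\alpha$-shifted symmetric function.
   Context: $J^{(\alpha)}_\lambda$ is the Jack symmetric function in Macdonald's $J$-normalization. Write $J^{(\alpha)}_\lambda=\sum_{\tau\vdash|\lambda|}\widehat K^{\lambda,(\alpha)}_\tau M_\tau$ (monomial basis) and $J^{(\alpha)}_\lambda=\sum_{\tau\vdash|\lambda|}\theta^{(\alpha)}_\tau(\lambda)\,\mathrm p_\tau$ (power-sum basis). The numbers $L_{\nu,\mu}$ are defined by $\mathrm p_\nu=\sum_{\mu\vdash k}L_{\nu,\mu}M_\mu$ for $\nu\vdash k$. For a partition $\mu$ with $m_i=m_i(\mu)$ parts equal to $i$, $z_\mu=\prod_i i^{m_i}m_i!$. For $\mu\vdash k$ and $|\lambda|=n$ ($\mu1^{n-k}$ is $\mu$ with $n-k$ parts $1$ appended): $\mathrm{Ko}^{(\alpha)}_\mu(\lambda)=\widehat K^{\lambda,(\alpha)}_{\mu1^{n-k}}/(n-k)!$ if $n\ge k$, $0$ otherwise; $\mathrm{Ch}^{(\alpha)}_\mu(\lambda)=\binom{n-k+m_1(\mu)}{m_1(\mu)}\,z_\mu\,\theta^{(\alpha)}_{\mu1^{n-k}}(\lambda)$ if $n\ge k$, $0$ otherwise. An $\alpha$-shifted symmetric function is a sequence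 $F=(F_N)_{N\ge1}$, $F_N\in\mathbb Q(\alpha)[x_1,\dots,x_N]$ symmetric in $x_1-1/\alpha,\dots,x_N-N/\alpha$, with $F_{N+1}(x_1,\dots,x_N,0)=F_N(x_1,\dots,x_N)$ and bounded degrees; it is viewed as a function on Young diagrams via $F(\lambda)=F_\ell(\lambda_1,\dots,\lambda_\ell)$ for $\lambda$ with $\ell$ rows. It is known that each $\mathrm{Ch}^{(\alpha)}_\nu$ is $\alpha$-shifted symmetric. *)

theory Defs
  imports Main "HOL-Library.FuncSet" "HOL-Library.Poly_Mapping"
    "HOL-Computational_Algebra.Polynomial" "HOL-Computational_Algebra.Fraction_Field"
    "HOL-Combinatorics.Permutations"
begin

type_synonym qa = "rat poly fract"

definition alpha :: qa where
  "alpha = Fract [:0, 1:] 1"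

definition is_partition :: "nat list \<Rightarrow> bool" where
  "is_partition la \<longleftrightarrow> sorted_wrt (\<ge>) la \<and> (\<forall>x\<in>set la. 0 < x)"

definition partitions :: "nat \<Rightarrow> nat list set" where
  "partitions k = {la. is_partition la \<and> sum_list la = k}"

definition mult :: "nat list \<Rightarrow> nat \<Rightarrow> nat" where
  "mult la i = count_list la i"

definition zee :: "nat list \<Rightarrow> nat" where
  "zee la = (\<Prod>i\<in>set la. i ^ mult la i * fact (mult la i))"

definition pad_ones :: "nat list \<Rightarrow> nat \<Rightarrow> nat list" where
  "pad_ones mu r = mu @ replicate r 1"

definition dominated :: "nat list \<Rightarrow> nat list \<Rightarrow> bool" where
  "dominated mu la \<longleftrightarrow> sum_list mu = sum_list la \<and>
     (\<forall>i. sum_list (take i mu) \<le> sum_list (take i la))"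

text \<open>L nu mu: the coefficient of the monomial x_1^{mu_1} ... x_l^{mu_l} in
  p_nu = prod_i (sum_j x_j^{nu_i}), i.e. the number of maps f from the parts of nu
  to the rows of mu such that the parts sent to row j sum up to mu_j.  Since p_nu is
  symmetric, this is the coefficient of M_mu in p_nu.\<close>
definition Lcoef :: "nat list \<Rightarrow> nat list \<Rightarrow> nat" where
  "Lcoef nu mu = card {f \<in> {..<length nu} \<rightarrow>\<^sub>E {..<length mu}.
      \<forall>j<length mu. (\<Sum>i\<in>{i. i < length nu \<and> f i = j}. nu ! i) = mu ! j}"

text \<open>A homogeneous symmetric function of degree n is represented by its coefficient
  vector in the monomial basis (M_tau)_{tau |- n}.  Its coordinates in the power-sum
  basis (p_tau)_{tau |- n}:\<close>
definition pcoord :: "nat \<Rightarrow> (nat list \<Rightarrow> qa) \<Rightarrow> nat list \<Rightarrow> qa" where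
  "pcoord n f = (THE a. (\<forall>tau. a tau \<noteq> 0 \<longrightarrow> tau \<in> partitions n) \<and>
     (\<forall>sg\<in>partitions n. f sg = (\<Sum>tau\<in>partitions n. a tau * of_nat (Lcoef tau sg))))"

definition jinner :: "nat \<Rightarrow> (nat list \<Rightarrow> qa) \<Rightarrow> (nat list \<Rightarrow> qa) \<Rightarrow> qa" where
  "jinner n f g = (\<Sum>tau\<in>partitions n.
      pcoord n f tau * pcoord n g tau * of_nat (zee tau) * alpha ^ length tau)"

text \<open>P_la: monomial coefficients, unitriangular w.r.t. dominance, pairwise orthogonal
  for the alpha inner product.\<close>
definition JackP :: "nat list \<Rightarrow> nat list \<Rightarrow> qa" where
  "JackP = (THE F.
     (\<forall>la mu. F la mu \<noteq> 0 \<longrightarrow> is_partition la \<and> is_partition mu \<and> dominated mu la) \<and>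
     (\<forall>la. is_partition la \<longrightarrow> F la la = 1) \<and>
     (\<forall>la mu. is_partition la \<longrightarrow> is_partition mu \<longrightarrow> sum_list la = sum_list mu \<longrightarrow>
        la \<noteq> mu \<longrightarrow> jinner (sum_list la) (F la) (F mu) = 0))"

text \<open>conjugate partition part la'_j (0-based j)\<close>
definition conj_part :: "nat list \<Rightarrow> nat \<Rightarrow> nat" where
  "conj_part la j = card {i. i < length la \<and> j < la ! i}"

definition cells :: "nat list \<Rightarrow> (nat \<times> nat) set" where
  "cells la = {(i, j). i < length la \<and> j < la ! i}"

definition hookc :: "nat list \<Rightarrow> qa" where
  "hookc la = (\<Prod>(i, j)\<in>cells la.
      alpha * of_nat (la ! i - j - 1) + of_nat (conj_part la j - i - 1) + 1)"

text \<open>J_la = c_la(alpha) P_la; its monomial coefficients Khat^{la}_tau:\<close>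
definition Khat :: "nat list \<Rightarrow> nat list \<Rightarrow> qa" where
  "Khat la tau = hookc la * JackP la tau"

definition theta :: "nat list \<Rightarrow> nat list \<Rightarrow> qa" where
  "theta tau la = pcoord (sum_list la) (Khat la) tau"

definition Ko :: "nat list \<Rightarrow> nat list \<Rightarrow> qa" where
  "Ko mu la = (let n = sum_list la; k = sum_list mu in
     if k \<le> n then Khat la (pad_ones mu (n - k)) / of_nat (fact (n - k)) else 0)"

definition Ch :: "nat list \<Rightarrow> nat list \<Rightarrow> qa" where
  "Ch mu la = (let n = sum_list la; k = sum_list mu in
     if k \<le> n then of_nat ((n - k + mult mu 1) choose (mult mu 1)) * of_nat (zee mu)
        * theta (pad_ones mu (n - k)) la else 0)"

text \<open>Multivariate polynomials over Q(alpha): finitely supported maps from exponent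
  vectors (variable x_i has index i, i >= 1) to coefficients.\<close>
type_synonym mpoly = "(nat \<Rightarrow>\<^sub>0 nat) \<Rightarrow>\<^sub>0 qa"

definition meval :: "mpoly \<Rightarrow> (nat \<Rightarrow> qa) \<Rightarrow> qa" where
  "meval p x = (\<Sum>m\<in>Poly_Mapping.keys p. Poly_Mapping.lookup p m *
     (\<Prod>i\<in>Poly_Mapping.keys (m :: nat \<Rightarrow>\<^sub>0 nat). x i ^ Poly_Mapping.lookup m i))"

definition mvars :: "mpoly \<Rightarrow> nat set" where
  "mvars p = (\<Union>m\<in>Poly_Mapping.keys p. Poly_Mapping.keys (m :: nat \<Rightarrow>\<^sub>0 nat))"

definition mtotdeg :: "mpoly \<Rightarrow> nat" where
  "mtotdeg p = Max (insert 0 ((\<lambda>m :: nat \<Rightarrow>\<^sub>0 nat. sum (Poly_Mapping.lookup m) (Poly_Mapping.keys m)) ` Poly_Mapping.keys p))"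

text \<open>F_N is symmetric in x_1 - 1/alpha, ..., x_N - N/alpha.  Since Q(alpha) is
  infinite, identities of polynomials are stated via polynomial functions.\<close>
definition shifted_sym_poly :: "nat \<Rightarrow> mpoly \<Rightarrow> bool" where
  "shifted_sym_poly N p \<longleftrightarrow>
     (\<forall>s y. s permutes {1..N} \<longrightarrow>
        meval p (\<lambda>i. y i + of_nat i / alpha) =
        meval p (\<lambda>i. y (s i) + of_nat i / alpha))"

definition alpha_shifted_symmetric :: "(nat \<Rightarrow> mpoly) \<Rightarrow> bool" where
  "alpha_shifted_symmetric F \<longleftrightarrow>
     (\<forall>N\<ge>1. mvars (F N) \<subseteq> {1..N} \<and> shifted_sym_poly N (F N)) \<and>
     (\<forall>N\<ge>1. \<forall>x. meval (F (Suc N)) (x(Suc N := 0)) = meval (F N) x) \<and>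
     (\<exists>d. \<forall>N\<ge>1. mtotdeg (F N) \<le> d)"

text \<open>Value on a Young diagram la with l rows: F_l(la_1, ..., la_l); for the empty
  diagram we use F_1(0) (= F_l for any l, by stability).\<close>
definition eval_diagram :: "(nat \<Rightarrow> mpoly) \<Rightarrow> nat list \<Rightarrow> qa" where
  "eval_diagram F la = meval (F (max 1 (length la)))
     (\<lambda>i. if 1 \<le> i \<and> i \<le> length la then of_nat (la ! (i - 1)) else 0)"

definition is_alpha_shifted_symmetric_fn :: "(nat list \<Rightarrow> qa) \<Rightarrow> bool" where
  "is_alpha_shifted_symmetric_fn g \<longleftrightarrow>
     (\<exists>F. alpha_shifted_symmetric F \<and> (\<forall>la. is_partition la \<longrightarrow> g la = eval_diagram F la))"

end

theory Submission
  imports Defs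
begin

lemma count_list_card: "count_list xs x = card {i. i < length xs \<and> xs ! i = x}"
proof -
  have "count_list xs x = length (filter (\<lambda>y. y = x) xs)"
    by (induction xs) auto
  then show ?thesis by (simp add: length_filter_conv_card)
qed

lemma pos_length_le_sum: "\<forall>x\<in>set xs. (0::nat) < x \<Longrightarrow> length xs \<le> sum_list xs"
  by (induction xs) auto

lemma part_length_le: "is_partition la \<Longrightarrow> length la \<le> sum_list la"
  unfolding is_partition_def by (simp add: pos_length_le_sum)

lemma finite_partitions: "finite (partitions n)"
proof -
  have "partitions n \<subseteq> {xs. set xs \<subseteq> {..n} \<and> length xs \<le> n}"
    using part_length_le member_le_sum_list unfolding partitions_def by fastforce
  moreover have "finite {xs. set xs \<subseteq> {..n} \<and> length xs \<le> n}"
    by (rule finite_lists_length_le) auto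
  ultimately show ?thesis by (rule finite_subset)
qed

lemma sorted_wrt_rep: "sorted_wrt (\<ge>) (replicate r (x::nat))"
  by (induction r) auto

lemma partition_pad: "is_partition nu \<Longrightarrow> is_partition (pad_ones nu r)"
  unfolding is_partition_def pad_ones_def
  by (auto simp: sorted_wrt_append Suc_le_eq sorted_wrt_rep)

lemma partition_butlast: "is_partition tau \<Longrightarrow> is_partition (butlast tau)"
  unfolding is_partition_def
  by (metis in_set_butlastD sorted_wrt_append append_butlast_last_id butlast.simps(1))

lemma partition_last1:
  assumes "is_partition tau" "1 \<in> set tau"
  shows "last tau = 1" "tau \<noteq> []"
proof -
  show ne: "tau \<noteq> []" using assms by auto
  have "sorted_wrt (\<ge>) (butlast tau @ [last tau])" using assms ne
    unfolding is_partition_def by simp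
  then have "\<forall>x\<in>set tau. last tau \<le> x"
    by (metis append_butlast_last_id ne le_refl sorted_wrt_append
        Un_iff set_append sorted_wrt_append emptyE empty_set insert_iff list.set(2))
  then have "last tau \<le> 1" using assms by auto
  moreover have "last tau > 0" using assms ne unfolding is_partition_def by auto
  ultimately show "last tau = 1" by simp
qed

lemma sum_one_singleton:
  assumes "finite S" "\<forall>i\<in>S. (0::nat) < w i" "sum w S = 1"
  shows "\<exists>i0. S = {i0} \<and> w i0 = 1"
proof -
  have "S \<noteq> {}" using assms by auto
  then obtain i0 where i0: "i0 \<in> S" by auto
  have s: "sum w S = w i0 + sum w (S - {i0})"
    using assms(1) i0 by (simp add: sum.remove)
  have "S - {i0} = {}"
  proof (rule ccontr)
    assume "S - {i0} \<noteq> {}"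
    then obtain j where "j \<in> S - {i0}" by auto
    then have "sum w (S - {i0}) \<ge> w j" using assms(1)
      by (intro member_le_sum) auto
    then have "sum w (S - {i0}) \<ge> 1" using assms(2) \<open>j \<in> S - {i0}\<close> by fastforce
    moreover have "w i0 \<ge> 1" using assms(2) i0 by fastforce
    ultimately show False using s assms(3) by linarith
  qed
  then have "S = {i0}" using i0 by auto
  then show ?thesis using assms(3) by auto
qed

definition Vs :: "nat list \<Rightarrow> nat list \<Rightarrow> (nat \<Rightarrow> nat) set" where
  "Vs nu mu = {f \<in> {..<length nu} \<rightarrow>\<^sub>E {..<length mu}.
      \<forall>j<length mu. (\<Sum>i\<in>{i. i < length nu \<and> f i = j}. nu ! i) = mu ! j}"

lemma Lcoef_Vs: "Lcoef nu mu = card (Vs nu mu)"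
  unfolding Lcoef_def Vs_def by simp

lemma finite_Vs: "finite (Vs nu mu)"
proof (rule finite_subset)
  show "Vs nu mu \<subseteq> {..<length nu} \<rightarrow>\<^sub>E {..<length mu}" unfolding Vs_def by auto
  show "finite ({..<length nu} \<rightarrow>\<^sub>E {..<length mu})" by (rule finite_PiE) auto
qed

lemma Lcoef_snoc1:
  assumes tp: "is_partition tau" and one: "1 \<in> set tau"
  shows "Lcoef tau (rho @ [1]) = count_list tau 1 * Lcoef (butlast tau) rho"
proof -
  define p where "p = length tau"
  define q where "q = length rho"
  define bt where "bt = butlast tau"
  have ne: "tau \<noteq> []" and lst: "last tau = 1" using partition_last1[OF tp one] by auto
  have p1: "p \<ge> 1" using ne p_def by (cases tau) auto
  have lbt: "length bt = p - 1" unfolding bt_def p_def by simp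
  have btn: "\<And>i. i < p - 1 \<Longrightarrow> bt ! i = tau ! i" unfolding bt_def p_def
    by (simp add: nth_butlast)
  have tlast: "tau ! (p - 1) = 1" using lst ne unfolding p_def by (simp add: last_conv_nth)
  have pos: "\<And>i. i < p \<Longrightarrow> 0 < tau ! i" using tp unfolding is_partition_def p_def
    by (auto simp: nth_mem)
  define Os where "Os = {i. i < p \<and> tau ! i = 1}"
  have cardO: "card Os = count_list tau 1" unfolding Os_def p_def by (simp add: count_list_card)
  have finO: "finite Os" unfolding Os_def by auto
  define hh where "hh = (\<lambda>(i0::nat) i. if i = i0 then p - 1 else i)"
  define F where "F = (\<lambda>i0 (g::nat\<Rightarrow>nat) i. if i < p then (if i = i0 then q
       else if i = p - 1 then g i0 else g i) else undefined)"
  define G where "G = (\<lambda>i0 (f::nat\<Rightarrow>nat) i. if i < p - 1 then f (hh i0 i) else undefined)"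
  define V where "V = Vs tau (rho @ [1])"
  define V' where "V' = Vs bt rho"
  define W where "W = (\<lambda>i0. {f \<in> V. f i0 = q})"
  have T: "(\<Sum>i\<in>{i. i < p - 1 \<and> P (hh i0 i)}. bt ! i) = (\<Sum>i\<in>{i. i < p \<and> i \<noteq> i0 \<and> P i}. tau ! i)"
    if i0: "i0 \<in> Os" for i0 P
  proof -
    have i0p: "i0 < p" and t0: "tau ! i0 = 1" using i0 unfolding Os_def by auto
    have bij: "bij_betw (hh i0) {i. i < p - 1 \<and> P (hh i0 i)} {i. i < p \<and> i \<noteq> i0 \<and> P i}"
    proof (rule bij_betw_imageI)
      show "inj_on (hh i0) {i. i < p - 1 \<and> P (hh i0 i)}"
        unfolding hh_def inj_on_def by auto
      show "hh i0 ` {i. i < p - 1 \<and> P (hh i0 i)} = {i. i < p \<and> i \<noteq> i0 \<and> P i}"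
      proof
        show "hh i0 ` {i. i < p - 1 \<and> P (hh i0 i)} \<subseteq> {i. i < p \<and> i \<noteq> i0 \<and> P i}"
          unfolding hh_def using p1 by auto
        show "{i. i < p \<and> i \<noteq> i0 \<and> P i} \<subseteq> hh i0 ` {i. i < p - 1 \<and> P (hh i0 i)}"
        proof
          fix x assume x: "x \<in> {i. i < p \<and> i \<noteq> i0 \<and> P i}"
          show "x \<in> hh i0 ` {i. i < p - 1 \<and> P (hh i0 i)}"
          proof (cases "x = p - 1")
            case True
            then have "i0 < p - 1" using x i0p by auto
            moreover have "hh i0 i0 = x" using True unfolding hh_def by simp
            ultimately show ?thesis using x by (auto intro!: image_eqI[where x=i0])
          next
            case False
            then have "x < p - 1" using x by auto
            moreover have "hh i0 x = x" using x unfolding hh_def by auto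
            ultimately show ?thesis using x by (auto intro!: image_eqI[where x=x])
          qed
        qed
      qed
    qed
    have "(\<Sum>i\<in>{i. i < p - 1 \<and> P (hh i0 i)}. bt ! i) = (\<Sum>i\<in>{i. i < p - 1 \<and> P (hh i0 i)}. tau ! (hh i0 i))"
    proof (intro sum.cong refl)
      fix i assume "i \<in> {i. i < p - 1 \<and> P (hh i0 i)}"
      then have ip: "i < p - 1" by simp
      show "bt ! i = tau ! (hh i0 i)"
      proof (cases "i = i0")
        case True
        then have "hh i0 i = p - 1" unfolding hh_def by simp
        then show ?thesis using True btn[OF ip] t0 tlast by simp
      next
        case False
        then have "hh i0 i = i" unfolding hh_def by simp
        then show ?thesis using btn[OF ip] by simp
      qed
    qed
    also have "\<dots> = (\<Sum>i\<in>{i. i < p \<and> i \<noteq> i0 \<and> P i}. tau ! i)"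
      by (rule sum.reindex_bij_betw[OF bij])
    finally show ?thesis .
  qed
  have sing: "\<exists>i0. {i. i < p \<and> f i = q} = {i0} \<and> tau ! i0 = 1" if f: "f \<in> V" for f
  proof -
    have "(\<Sum>i\<in>{i. i < p \<and> f i = q}. tau ! i) = (rho @ [1]) ! q"
      using f unfolding V_def Vs_def p_def q_def by auto
    then have "(\<Sum>i\<in>{i. i < p \<and> f i = q}. tau ! i) = 1" unfolding q_def by simp
    then show ?thesis by (intro sum_one_singleton) (auto simp: pos)
  qed
  have Vun: "V = (\<Union>i0\<in>Os. W i0)"
  proof
    show "V \<subseteq> (\<Union>i0\<in>Os. W i0)"
    proof
      fix f assume f: "f \<in> V"
      then obtain i0 where "{i. i < p \<and> f i = q} = {i0}" "tau ! i0 = 1" using sing by blast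
      then have "i0 \<in> Os" "f i0 = q" unfolding Os_def by auto
      then show "f \<in> (\<Union>i0\<in>Os. W i0)" using f unfolding W_def by auto
    qed
    show "(\<Union>i0\<in>Os. W i0) \<subseteq> V" unfolding W_def by auto
  qed
  have disj: "\<forall>a\<in>Os. \<forall>b\<in>Os. a \<noteq> b \<longrightarrow> W a \<inter> W b = {}"
  proof (intro ballI impI)
    fix a b assume a: "a \<in> Os" and b: "b \<in> Os" and ab: "a \<noteq> b"
    show "W a \<inter> W b = {}"
    proof (rule ccontr)
      assume "W a \<inter> W b \<noteq> {}"
      then obtain f where f: "f \<in> V" "f a = q" "f b = q" unfolding W_def by auto
      then obtain i0 where i0: "{i. i < p \<and> f i = q} = {i0}" using sing by blast
      have "a \<in> {i. i < p \<and> f i = q}" "b \<in> {i. i < p \<and> f i = q}"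
        using f a b unfolding Os_def by auto
      then show False using i0 ab by simp
    qed
  qed
  have finW: "finite (W i0)" for i0 unfolding W_def V_def using finite_Vs by auto
  have cardW: "card (W i0) = card V'" if i0: "i0 \<in> Os" for i0
  proof -
    have i0p: "i0 < p" and t0: "tau ! i0 = 1" using i0 unfolding Os_def by auto
    have FG: "bij_betw (F i0) V' (W i0)"
    proof (rule bij_betw_byWitness[where f'="G i0"])
      show "\<forall>g\<in>V'. G i0 (F i0 g) = g"
      proof
        fix g assume g: "g \<in> V'"
        show "G i0 (F i0 g) = g"
        proof
          fix i show "G i0 (F i0 g) i = g i"
          proof (cases "i < p - 1")
            case True then show ?thesis unfolding G_def F_def hh_def by auto
          next
            case False then show ?thesis using g unfolding G_def V'_def Vs_def lbt
              by (auto simp: PiE_def extensional_def)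
          qed
        qed
      qed
      show "\<forall>f\<in>W i0. F i0 (G i0 f) = f"
      proof
        fix f assume f: "f \<in> W i0"
        show "F i0 (G i0 f) = f"
        proof
          fix i show "F i0 (G i0 f) i = f i"
          proof (cases "i < p")
            case True
            then show ?thesis using f i0p unfolding F_def G_def hh_def W_def by auto
          next
            case False then show ?thesis using f unfolding F_def W_def V_def Vs_def p_def
              by (auto simp: PiE_def extensional_def)
          qed
        qed
      qed
      show "F i0 ` V' \<subseteq> W i0"
      proof
        fix f assume "f \<in> F i0 ` V'"
        then obtain g where g: "g \<in> V'" and fg: "f = F i0 g" by auto
        have gr: "\<And>i. i < p - 1 \<Longrightarrow> g i < q" using g unfolding V'_def Vs_def lbt q_def by auto
        have fr: "\<And>i. i < p \<Longrightarrow> i \<noteq> i0 \<Longrightarrow> f i < q"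
          using gr i0p unfolding fg F_def by auto
        have fi0: "f i0 = q" unfolding fg F_def using i0p by simp
        have fPi: "f \<in> {..<length tau} \<rightarrow>\<^sub>E {..<length (rho @ [1])}"
        proof (rule PiE_I)
          fix i assume "i \<in> {..<length tau}"
          then have "i < p" unfolding p_def by simp
          then show "f i \<in> {..<length (rho @ [1])}" using fr[of i] fi0
            by (cases "i = i0") (auto simp: q_def)
        next
          fix i assume "i \<notin> {..<length tau}"
          then show "f i = undefined" unfolding fg F_def p_def by auto
        qed
        have rows: "(\<Sum>i\<in>{i. i < length tau \<and> f i = j}. tau ! i) = (rho @ [1]) ! j"
          if j: "j < length (rho @ [1])" for j
        proof (cases "j = q")
          case True
          have "{i. i < length tau \<and> f i = j} = {i0}" using fr fi0 i0p True unfolding p_def by force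
          then show ?thesis using True t0 q_def by simp
        next
          case False
          then have jq: "j < q" using j q_def by auto
          have "{i. i < length tau \<and> f i = j} = {i. i < p \<and> i \<noteq> i0 \<and> f i = j}"
            using fi0 jq unfolding p_def by auto
          then have "(\<Sum>i\<in>{i. i < length tau \<and> f i = j}. tau ! i)
              = (\<Sum>i\<in>{i. i < p - 1 \<and> f (hh i0 i) = j}. bt ! i)"
            using T[OF i0, of "\<lambda>i. f i = j"] by simp
          also have "{i. i < p - 1 \<and> f (hh i0 i) = j} = {i. i < length bt \<and> g i = j}"
            unfolding fg F_def hh_def lbt by auto
          also have "(\<Sum>i\<in>{i. i < length bt \<and> g i = j}. bt ! i) = rho ! j"
            using g jq unfolding V'_def Vs_def q_def by auto
          finally show ?thesis using jq q_def by (simp add: nth_append)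
        qed
        show "f \<in> W i0" unfolding W_def V_def Vs_def using fPi rows fi0 by auto
      qed
      show "G i0 ` W i0 \<subseteq> V'"
      proof
        fix g assume "g \<in> G i0 ` W i0"
        then obtain f where f: "f \<in> W i0" and gf: "g = G i0 f" by auto
        have fV: "f \<in> V" and fi0: "f i0 = q" using f unfolding W_def by auto
        obtain k where k: "{i. i < p \<and> f i = q} = {k}" using sing[OF fV] by blast
        have fne: "f i \<noteq> q" if "i < p" "i \<noteq> i0" for i
        proof
          assume "f i = q"
          then have "i \<in> {i. i < p \<and> f i = q}" "i0 \<in> {i. i < p \<and> f i = q}"
            using that fi0 i0p by auto
          then show False using k that(2) by simp
        qed
        have flt: "\<And>i. i < p \<Longrightarrow> f i < Suc q" using fV unfolding V_def Vs_def p_def q_def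
          by auto
        have hr: "\<And>i. i < p - 1 \<Longrightarrow> hh i0 i < p \<and> hh i0 i \<noteq> i0" unfolding hh_def by auto
        have gPi: "g \<in> {..<length bt} \<rightarrow>\<^sub>E {..<length rho}"
          unfolding gf G_def lbt q_def[symmetric]
        proof (rule PiE_I)
          fix i assume "i \<in> {..<p - 1}"
          then have i: "i < p - 1" by simp
          have "hh i0 i < p" "hh i0 i \<noteq> i0" using hr[OF i] by auto
          then have "f (hh i0 i) \<noteq> q" "f (hh i0 i) < Suc q" using fne flt by auto
          then show "(\<lambda>i. if i < p - 1 then f (hh i0 i) else undefined) i \<in> {..<q}"
            using i by auto
        next
          fix i assume "i \<notin> {..<p - 1}"
          then show "(\<lambda>i. if i < p - 1 then f (hh i0 i) else undefined) i = undefined" by auto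
        qed
        have rows: "(\<Sum>i\<in>{i. i < length bt \<and> g i = j}. bt ! i) = rho ! j" if j: "j < length rho" for j
        proof -
          have "{i. i < length bt \<and> g i = j} = {i. i < p - 1 \<and> f (hh i0 i) = j}"
            unfolding gf G_def lbt by auto
          then have "(\<Sum>i\<in>{i. i < length bt \<and> g i = j}. bt ! i)
               = (\<Sum>i\<in>{i. i < p \<and> i \<noteq> i0 \<and> f i = j}. tau ! i)"
            using T[OF i0, of "\<lambda>i. f i = j"] by simp
          also have "{i. i < p \<and> i \<noteq> i0 \<and> f i = j} = {i. i < length tau \<and> f i = j}"
            using fi0 j unfolding p_def q_def by auto
          also have "(\<Sum>i\<in>{i. i < length tau \<and> f i = j}. tau ! i) = (rho @ [1]) ! j"
            using fV j unfolding V_def Vs_def by auto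
          finally show ?thesis using j by (simp add: nth_append)
        qed
        show "g \<in> V'" unfolding V'_def Vs_def using gPi rows by auto
      qed
    qed
    then show ?thesis by (simp add: bij_betw_same_card)
  qed
  have "Lcoef tau (rho @ [1]) = card V" unfolding V_def Lcoef_Vs ..
  also have "\<dots> = (\<Sum>i0\<in>Os. card (W i0))" unfolding Vun
    by (rule card_UN_disjoint[OF finO]) (use finW disj in auto)
  also have "\<dots> = (\<Sum>i0\<in>Os. card V')" using cardW by simp
  also have "\<dots> = count_list tau 1 * Lcoef (butlast tau) rho"
    using cardO by (simp add: V'_def bt_def Lcoef_Vs)
  finally show ?thesis .
qed


lemma Lcoef_snoc1_0:
  assumes tp: "is_partition tau" and one: "1 \<notin> set tau"
  shows "Lcoef tau (rho @ [1]) = 0"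
proof -
  have "Vs tau (rho @ [1]) = {}"
  proof (rule ccontr)
    assume "Vs tau (rho @ [1]) \<noteq> {}"
    then obtain f where f: "f \<in> Vs tau (rho @ [1])" by auto
    then have "(\<Sum>i\<in>{i. i < length tau \<and> f i = length rho}. tau ! i) = (rho @ [1]) ! length rho"
      unfolding Vs_def by auto
    then have "(\<Sum>i\<in>{i. i < length tau \<and> f i = length rho}. tau ! i) = 1" by simp
    moreover have "\<forall>i\<in>{i. i < length tau \<and> f i = length rho}. 0 < tau ! i"
      using tp unfolding is_partition_def by (auto simp: nth_mem)
    ultimately have "\<exists>i0. {i. i < length tau \<and> f i = length rho} = {i0} \<and> tau ! i0 = 1"
      by (intro sum_one_singleton) auto
    then obtain i0 where "{i. i < length tau \<and> f i = length rho} = {i0}" "tau ! i0 = 1"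
      by blast
    then have "i0 < length tau" "tau ! i0 = 1" by auto
    then show False using one nth_mem by metis
  qed
  then show ?thesis unfolding Lcoef_Vs by simp
qed

lemma Lcoef_snoc:
  assumes tp: "is_partition tau"
  shows "Lcoef tau (rho @ [1]) = count_list tau 1 * Lcoef (butlast tau) rho"
proof (cases "1 \<in> set tau")
  case True then show ?thesis using Lcoef_snoc1[OF tp] by simp
next
  case False
  then have "count_list tau 1 = 0" by (simp add: count_list_0_iff)
  then show ?thesis using Lcoef_snoc1_0[OF tp False] by simp
qed

lemma Lcoef_pad:
  assumes "is_partition tau"
  shows "Lcoef tau (mu @ replicate r 1) =
    (\<Prod>i<r. count_list tau 1 - i) * Lcoef (take (length tau - r) tau) mu"
  using assms
proof (induction r arbitrary: tau)
  case 0 then show ?case by simp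
next
  case (Suc r)
  define c where "c = count_list tau 1"
  have eq: "mu @ replicate (Suc r) 1 = (mu @ replicate r 1) @ [1]"
    by (simp add: replicate_append_same)
  have "Lcoef tau (mu @ replicate (Suc r) 1) = c * Lcoef (butlast tau) (mu @ replicate r 1)"
    unfolding eq c_def by (rule Lcoef_snoc[OF Suc.prems])
  also have "\<dots> = c * ((\<Prod>i<r. count_list (butlast tau) 1 - i) *
      Lcoef (take (length (butlast tau) - r) (butlast tau)) mu)"
    using Suc.IH[OF partition_butlast[OF Suc.prems]] by simp
  also have "\<dots> = (\<Prod>i<Suc r. c - i) * Lcoef (take (length tau - Suc r) tau) mu"
  proof (cases "c = 0")
    case True
    then show ?thesis by (simp add: prod.lessThan_Suc_shift)
  next
    case False
    then have one: "1 \<in> set tau" unfolding c_def by (simp add: count_list_0_iff)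
    have ne: "tau \<noteq> []" and lst: "last tau = 1" using partition_last1[OF Suc.prems one] by auto
    have "tau = butlast tau @ [1]" using ne lst by (metis append_butlast_last_id)
    then have "count_list tau 1 = count_list (butlast tau @ [1]) 1" by simp
    then have "c = count_list (butlast tau) 1 + 1" unfolding c_def
      by (simp add: count_list_append)
    then have cb: "count_list (butlast tau) 1 = c - 1" by simp
    have tk: "take (length (butlast tau) - r) (butlast tau) = take (length tau - Suc r) tau"
      by (simp add: butlast_conv_take min_def)
    have "(\<Prod>i<Suc r. c - i) = c * (\<Prod>i<r. c - 1 - i)"
      unfolding prod.lessThan_Suc_shift by simp
    then show ?thesis using cb tk by simp
  qed
  finally show ?case unfolding c_def .
qed


lemma Lcoef_ne0_obtain:
  assumes "Lcoef tau sg \<noteq> 0"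
  obtains f where "f \<in> Vs tau sg"
  using assms unfolding Lcoef_Vs by (metis card.empty equals0I)

lemma Lcoef_len:
  assumes sp: "is_partition sg" and L: "Lcoef tau sg \<noteq> 0"
  shows "length sg \<le> length tau"
proof -
  obtain f where f: "f \<in> Vs tau sg" using Lcoef_ne0_obtain[OF L] by blast
  have "{..<length sg} \<subseteq> f ` {..<length tau}"
  proof
    fix j assume j: "j \<in> {..<length sg}"
    then have "(\<Sum>i\<in>{i. i < length tau \<and> f i = j}. tau ! i) = sg ! j"
      using f unfolding Vs_def by auto
    moreover have "sg ! j > 0" using sp j unfolding is_partition_def by (auto simp: nth_mem)
    ultimately have "{i. i < length tau \<and> f i = j} \<noteq> {}" by (metis neq0_conv sum.empty)
    then show "j \<in> f ` {..<length tau}" by auto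
  qed
  then have "card {..<length sg} \<le> card (f ` {..<length tau})"
    by (intro card_mono) auto
  also have "\<dots> \<le> card {..<length tau}" by (rule card_image_le) auto
  finally show ?thesis by simp
qed

lemma sorted_desc_eq:
  assumes "is_partition tau" "is_partition sg" "mset tau = mset sg"
  shows "tau = sg"
proof -
  have s1: "sorted (rev tau)" and s2: "sorted (rev sg)" using assms(1,2)
    unfolding is_partition_def by (simp_all add: sorted_wrt_rev)
  have "sort (rev sg) = rev tau" by (rule properties_for_sort) (use assms(3) s1 in simp_all)
  moreover have "sort (rev sg) = rev sg" using s2 by (simp add: sorted_sort_id)
  ultimately show ?thesis by simp
qed

lemma Lcoef_eq_len:
  assumes tp: "is_partition tau" and sp: "is_partition sg" and L: "Lcoef tau sg \<noteq> 0"
    and len: "length tau = length sg"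
  shows "tau = sg"
proof -
  define l where "l = length sg"
  obtain f where f: "f \<in> Vs tau sg" using Lcoef_ne0_obtain[OF L] by blast
  have fr: "\<And>i. i < l \<Longrightarrow> f i < l" using f len unfolding Vs_def l_def by auto
  have sub: "{..<l} \<subseteq> f ` {..<l}"
  proof
    fix j assume j: "j \<in> {..<l}"
    then have "(\<Sum>i\<in>{i. i < length tau \<and> f i = j}. tau ! i) = sg ! j"
      using f unfolding Vs_def l_def by auto
    moreover have "sg ! j > 0" using sp j unfolding is_partition_def l_def by (auto simp: nth_mem)
    ultimately have "{i. i < length tau \<and> f i = j} \<noteq> {}" by (metis neq0_conv sum.empty)
    then show "j \<in> f ` {..<l}" using len l_def by auto
  qed
  have im: "f ` {..<l} = {..<l}" using sub fr by auto
  have inj: "inj_on f {..<l}" by (rule eq_card_imp_inj_on) (use im in auto)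
  have val: "tau ! i = sg ! (f i)" if i: "i < l" for i
  proof -
    have "{k. k < length tau \<and> f k = f i} = {i}" using inj i len l_def
      by (auto simp: inj_on_def)
    moreover have "(\<Sum>k\<in>{k. k < length tau \<and> f k = f i}. tau ! k) = sg ! (f i)"
      using f fr[OF i] unfolding Vs_def l_def by auto
    ultimately show ?thesis by simp
  qed
  define g where "g = (\<lambda>i. if i < l then f i else i)"
  have gp: "g permutes {..<length sg}"
  proof (rule bij_imp_permutes)
    have "bij_betw f {..<l} {..<l}" using inj im by (simp add: bij_betw_def)
    then show "bij_betw g {..<length sg} {..<length sg}"
      unfolding l_def[symmetric] by (rule bij_betw_cong[THEN iffD1, rotated]) (auto simp: g_def)
    show "\<And>x. x \<notin> {..<length sg} \<Longrightarrow> g x = x" unfolding g_def l_def by auto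
  qed
  have "permute_list g sg = tau"
  proof (rule nth_equalityI)
    show "length (permute_list g sg) = length tau" using len by simp
    fix i assume "i < length (permute_list g sg)"
    then have i: "i < l" unfolding l_def by simp
    have "permute_list g sg ! i = sg ! g i" by (rule permute_list_nth[OF gp]) (use i l_def in simp)
    also have "\<dots> = tau ! i" using val[OF i] i unfolding g_def by simp
    finally show "permute_list g sg ! i = tau ! i" .
  qed
  then have "mset tau = mset sg" using mset_permute_list[OF gp] by simp
  then show ?thesis using sorted_desc_eq tp sp by blast
qed

lemma Lcoef_diag: "Lcoef sg sg \<noteq> 0"
proof -
  have "restrict id {..<length sg} \<in> Vs sg sg"
  proof -
    have "{i. i < length sg \<and> restrict id {..<length sg} i = j} = {j}" if "j < length sg" for j
      using that by auto
    then show ?thesis unfolding Vs_def by auto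
  qed
  then have "Vs sg sg \<noteq> {}" by auto
  then show ?thesis unfolding Lcoef_Vs using finite_Vs by simp
qed


definition PProp :: "nat \<Rightarrow> (nat list \<Rightarrow> qa) \<Rightarrow> (nat list \<Rightarrow> qa) \<Rightarrow> bool" where
  "PProp n f a \<longleftrightarrow> (\<forall>tau. a tau \<noteq> 0 \<longrightarrow> tau \<in> partitions n) \<and>
     (\<forall>sg\<in>partitions n. f sg = (\<Sum>tau\<in>partitions n. a tau * of_nat (Lcoef tau sg)))"

lemma Lm_len: "tau \<in> partitions n \<Longrightarrow> sg \<in> partitions n \<Longrightarrow> (of_nat (Lcoef tau sg) :: qa) \<noteq> 0
   \<Longrightarrow> length sg \<le> length tau"
  using Lcoef_len unfolding partitions_def by auto

lemma Lm_eq: "tau \<in> partitions n \<Longrightarrow> sg \<in> partitions n \<Longrightarrow> (of_nat (Lcoef tau sg) :: qa) \<noteq> 0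
   \<Longrightarrow> length sg = length tau \<Longrightarrow> tau = sg"
  using Lcoef_eq_len unfolding partitions_def by auto

lemma Lm_diag: "(of_nat (Lcoef sg sg) :: qa) \<noteq> 0"
  using Lcoef_diag by simp

lemma part_len_n: "sg \<in> partitions n \<Longrightarrow> length sg \<le> n"
  using part_length_le unfolding partitions_def by auto

lemma PProp_unique:
  assumes A: "PProp n f a" and B: "PProp n f b"
  shows "a = b"
proof (rule ccontr)
  assume ne: "a \<noteq> b"
  define P where "P = partitions n"
  define D where "D = {tau \<in> P. a tau \<noteq> b tau}"
  have "\<exists>tau. a tau \<noteq> b tau" using ne by auto
  then obtain t0 where "a t0 \<noteq> b t0" by auto
  moreover have "t0 \<in> P"
  proof (rule ccontr)
    assume "t0 \<notin> P"
    then have "a t0 = 0" "b t0 = 0" using A B unfolding PProp_def P_def by auto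
    then show False using \<open>a t0 \<noteq> b t0\<close> by simp
  qed
  ultimately have t0D: "t0 \<in> D" unfolding D_def by auto
  have finD: "finite D" unfolding D_def P_def using finite_partitions by auto
  define m where "m = Max (length ` D)"
  have "m \<in> length ` D" unfolding m_def using finD t0D by (intro Max_in) auto
  then obtain sg where sgD: "sg \<in> D" and lsg: "length sg = m" by auto
  have maxl: "\<And>t. t \<in> D \<Longrightarrow> length t \<le> m" unfolding m_def using finD by auto
  have sgP: "sg \<in> P" using sgD unfolding D_def by auto
  have "(\<Sum>tau\<in>P. a tau * of_nat (Lcoef tau sg)) = (\<Sum>tau\<in>P. b tau * of_nat (Lcoef tau sg))"
  proof -
    have "f sg = (\<Sum>tau\<in>P. a tau * of_nat (Lcoef tau sg))" using A sgP unfolding PProp_def P_def by blast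
    moreover have "f sg = (\<Sum>tau\<in>P. b tau * of_nat (Lcoef tau sg))" using B sgP unfolding PProp_def P_def by blast
    ultimately show ?thesis by simp
  qed
  then have "(\<Sum>tau\<in>P. (a tau - b tau) * of_nat (Lcoef tau sg)) = 0"
    by (simp add: algebra_simps sum_subtractf)
  moreover have "(\<Sum>tau\<in>P. (a tau - b tau) * of_nat (Lcoef tau sg)) =
     (a sg - b sg) * of_nat (Lcoef sg sg) + (\<Sum>tau\<in>P - {sg}. (a tau - b tau) * of_nat (Lcoef tau sg))"
    using sgP finite_partitions unfolding P_def by (simp add: sum.remove)
  moreover have "(\<Sum>tau\<in>P - {sg}. (a tau - b tau) * (of_nat (Lcoef tau sg) :: qa)) = 0"
  proof (rule sum.neutral, rule ballI)
    fix tau assume tau: "tau \<in> P - {sg}"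
    show "(a tau - b tau) * (of_nat (Lcoef tau sg) :: qa) = 0"
    proof (cases "a tau = b tau")
      case False
      then have "tau \<in> D" using tau unfolding D_def by auto
      then have l1: "length tau \<le> length sg" using maxl lsg by auto
      show ?thesis
      proof (rule ccontr)
        assume "(a tau - b tau) * (of_nat (Lcoef tau sg) :: qa) \<noteq> 0"
        then have Lne: "(of_nat (Lcoef tau sg) :: qa) \<noteq> 0" by auto
        then have "length sg \<le> length tau" using Lm_len tau sgP unfolding P_def by auto
        then have "tau = sg" using Lm_eq[OF _ _ Lne] tau sgP l1 unfolding P_def by auto
        then show False using tau by auto
      qed
    qed simp
  qed
  ultimately have "(a sg - b sg) * (of_nat (Lcoef sg sg) :: qa) = 0" by simp
  then have "a sg = b sg" using Lcoef_diag[of sg] by simp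
  then show False using sgD unfolding D_def by auto
qed

lemma PProp_exists_step:
  fixes f :: "nat list \<Rightarrow> qa"
  assumes ex: "\<exists>a. (\<forall>tau. a tau \<noteq> 0 \<longrightarrow> tau \<in> partitions n \<and> Suc j \<le> length tau) \<and>
     (\<forall>sg\<in>partitions n. Suc j \<le> length sg \<longrightarrow> f sg = (\<Sum>tau\<in>partitions n. a tau * of_nat (Lcoef tau sg)))"
  shows "\<exists>a. (\<forall>tau. a tau \<noteq> 0 \<longrightarrow> tau \<in> partitions n \<and> j \<le> length tau) \<and>
     (\<forall>sg\<in>partitions n. j \<le> length sg \<longrightarrow> f sg = (\<Sum>tau\<in>partitions n. a tau * of_nat (Lcoef tau sg)))"
proof -
  define P where "P = partitions n"
  obtain a where asup: "\<And>tau. a tau \<noteq> 0 \<Longrightarrow> tau \<in> P \<and> Suc j \<le> length tau"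
    and aeq: "\<And>sg. sg \<in> P \<Longrightarrow> Suc j \<le> length sg \<Longrightarrow> f sg = (\<Sum>tau\<in>P. a tau * of_nat (Lcoef tau sg))"
    using ex unfolding P_def by blast
  define dl where "dl = (\<lambda>tau. (f tau - (\<Sum>t\<in>P. a t * of_nat (Lcoef t tau))) / (of_nat (Lcoef tau tau) :: qa))"
  define e where "e = (\<lambda>tau. if tau \<in> P \<and> length tau = j then dl tau else 0)"
  define a' where "a' = (\<lambda>tau. a tau + e tau)"
  have finP: "finite P" unfolding P_def by (rule finite_partitions)
  have sup': "a' tau \<noteq> 0 \<longrightarrow> tau \<in> P \<and> j \<le> length tau" for tau
    using asup[of tau] unfolding a'_def e_def by (cases "a tau = 0") auto
  have eq': "f sg = (\<Sum>tau\<in>P. a' tau * of_nat (Lcoef tau sg))" if sg: "sg \<in> P" "j \<le> length sg" for sg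
  proof -
    have split: "(\<Sum>tau\<in>P. a' tau * of_nat (Lcoef tau sg)) =
      (\<Sum>tau\<in>P. a tau * of_nat (Lcoef tau sg)) + (\<Sum>tau\<in>P. e tau * (of_nat (Lcoef tau sg) :: qa))"
      unfolding a'_def by (simp add: distrib_right sum.distrib)
    show ?thesis
    proof (cases "length sg = j")
      case False
      then have sj: "Suc j \<le> length sg" using sg(2) by linarith
      have "(\<Sum>tau\<in>P. e tau * (of_nat (Lcoef tau sg) :: qa)) = 0"
      proof (rule sum.neutral, rule ballI)
        fix tau assume tau: "tau \<in> P"
        show "e tau * (of_nat (Lcoef tau sg) :: qa) = 0"
        proof (cases "length tau = j")
          case True
          show ?thesis
          proof (rule ccontr)
            assume "e tau * (of_nat (Lcoef tau sg) :: qa) \<noteq> 0"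
            then have "(of_nat (Lcoef tau sg) :: qa) \<noteq> 0" by auto
            then have "length sg \<le> length tau" using Lm_len tau sg unfolding P_def by auto
            then show False using True sj by auto
          qed
        qed (simp add: e_def)
      qed
      then show ?thesis using split aeq[OF sg(1) sj] by simp
    next
      case True
      have "(\<Sum>tau\<in>P. e tau * (of_nat (Lcoef tau sg) :: qa)) =
         e sg * of_nat (Lcoef sg sg) + (\<Sum>tau\<in>P - {sg}. e tau * (of_nat (Lcoef tau sg) :: qa))"
        using sg finP by (simp add: sum.remove)
      moreover have "(\<Sum>tau\<in>P - {sg}. e tau * (of_nat (Lcoef tau sg) :: qa)) = 0"
      proof (rule sum.neutral, rule ballI)
        fix tau assume tau: "tau \<in> P - {sg}"
        show "e tau * (of_nat (Lcoef tau sg) :: qa) = 0"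
        proof (cases "length tau = j")
          case lt: True
          show ?thesis
          proof (rule ccontr)
            assume "e tau * (of_nat (Lcoef tau sg) :: qa) \<noteq> 0"
            then have Lne: "(of_nat (Lcoef tau sg) :: qa) \<noteq> 0" by auto
            have "tau = sg" using Lm_eq[OF _ _ Lne] tau sg lt True unfolding P_def by auto
            then show False using tau by auto
          qed
        qed (simp add: e_def)
      qed
      moreover have "(\<Sum>tau\<in>P. a tau * of_nat (Lcoef tau sg)) =
         (\<Sum>t\<in>P. a t * of_nat (Lcoef t sg))" by simp
      moreover have "e sg * of_nat (Lcoef sg sg) = f sg - (\<Sum>t\<in>P. a t * of_nat (Lcoef t sg))"
        using sg True Lm_diag[of sg] unfolding e_def dl_def by simp
      ultimately show ?thesis using split by simp
    qed
  qed
  show ?thesis using sup' eq' unfolding P_def by blast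
qed

lemma PProp_exists: "\<exists>a. PProp n (f :: nat list \<Rightarrow> qa) a"
proof -
  have "\<exists>a. (\<forall>tau. a tau \<noteq> 0 \<longrightarrow> tau \<in> partitions n \<and> j \<le> length tau) \<and>
     (\<forall>sg\<in>partitions n. j \<le> length sg \<longrightarrow> f sg = (\<Sum>tau\<in>partitions n. a tau * of_nat (Lcoef tau sg)))"
    if "j \<le> Suc n" for j
    using that
  proof (induction j rule: inc_induct)
    case base
    have nolen: "\<And>sg. sg \<in> partitions n \<Longrightarrow> \<not> Suc n \<le> length sg"
      using part_len_n by (meson not_less_eq_eq)
    show ?case by (rule exI[of _ "\<lambda>_. 0"]) (simp add: nolen)
  next
    case (step m)
    from step(3) show ?case by (rule PProp_exists_step)
  qed
  from this[of 0] have "\<exists>a. (\<forall>tau. a tau \<noteq> 0 \<longrightarrow> tau \<in> partitions n) \<and>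
     (\<forall>sg\<in>partitions n. f sg = (\<Sum>tau\<in>partitions n. a tau * of_nat (Lcoef tau sg)))"
    by simp
  then show ?thesis unfolding PProp_def .
qed

lemma pcoord_prop: "PProp n f (pcoord n f)"
proof -
  have "\<exists>!a. PProp n f a" using PProp_exists PProp_unique by blast
  then have "PProp n f (THE a. PProp n f a)" by (rule theI')
  moreover have "pcoord n f = (THE a. PProp n f a)" unfolding pcoord_def PProp_def by (rule refl)
  ultimately show ?thesis by simp
qed


lemma drop_ones:
  assumes "is_partition tau" "r \<le> count_list tau 1"
  shows "drop (length tau - r) tau = replicate r 1"
  using assms
proof (induction r arbitrary: tau)
  case 0 then show ?case by simp
next
  case (Suc r)
  then have one: "1 \<in> set tau" by (metis count_list_0_iff not_less_eq_eq zero_le)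
  have ne: "tau \<noteq> []" and lst: "last tau = 1" using partition_last1[OF Suc.prems(1) one] by auto
  have tb: "tau = butlast tau @ [1]" using ne lst by (metis append_butlast_last_id)
  have "count_list tau 1 = count_list (butlast tau @ [1]) 1" using tb by simp
  then have cb: "count_list (butlast tau) 1 + 1 = count_list tau 1" by (simp add: count_list_append)
  have IH: "drop (length (butlast tau) - r) (butlast tau) = replicate r 1"
    using Suc.IH[OF partition_butlast[OF Suc.prems(1)]] cb Suc.prems(2) by simp
  have lr: "Suc r \<le> length tau" using Suc.prems(2) count_le_length[of tau 1] by simp
  have "drop (length tau - Suc r) tau = drop (length (butlast tau) - r) (butlast tau) @ [1]"
    using lr by (subst tb, simp)
  then show ?case using IH by (simp add: replicate_append_same)
qed

lemma prod_choose: "(\<Prod>i<r. m + r - i) = fact r * ((m + r) choose r)"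
proof (induction r)
  case 0 then show ?case by simp
next
  case (Suc r)
  have "(\<Prod>i<Suc r. m + Suc r - i) = (m + Suc r) * (\<Prod>i<r. m + r - i)"
    unfolding prod.lessThan_Suc_shift by simp
  also have "\<dots> = (m + Suc r) * (fact r * ((m + r) choose r))" using Suc by simp
  also have "\<dots> = fact r * (Suc (m + r) * ((m + r) choose r))" by (simp add: algebra_simps)
  also have "Suc (m + r) * ((m + r) choose r) = Suc r * (Suc (m + r) choose Suc r)"
    by (rule Suc_times_binomial[symmetric])
  also have "fact r * (Suc r * (Suc (m + r) choose Suc r)) = fact (Suc r) * (Suc (m + r) choose Suc r)"
    by (simp only: fact_Suc of_nat_id mult.assoc mult.left_commute)
  finally show ?case by (simp del: binomial_Suc_Suc prod.lessThan_Suc)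
qed

lemma sum_rep1 [simp]: "sum_list (replicate r (Suc 0)) = r"
  by (induction r) auto

lemma count_rep1 [simp]: "count_list (replicate r (Suc 0)) (Suc 0) = r"
  by (induction r) auto

lemma zee_nz: "is_partition nu \<Longrightarrow> zee nu \<noteq> 0"
  unfolding zee_def is_partition_def by (auto simp: prod_zero_iff)

lemma Ko_identity:
  assumes mu: "mu \<in> partitions k" and la: "is_partition la"
  shows "Ko mu la = (\<Sum>nu\<in>partitions k. of_nat (Lcoef nu mu) / of_nat (zee nu) * Ch nu la)"
proof (cases "k \<le> sum_list la")
  case False
  have "Ch nu la = 0" if "nu \<in> partitions k" for nu
    using that False unfolding Ch_def partitions_def Let_def by auto
  moreover have "Ko mu la = 0" using False mu unfolding Ko_def partitions_def Let_def by auto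
  ultimately show ?thesis by simp
next
  case True
  define n where "n = sum_list la"
  define r where "r = n - k"
  define f where "f = Khat la"
  define a where "a = pcoord n f"
  have kn: "k \<le> n" using True n_def by simp
  have PP: "PProp n f a" unfolding a_def by (rule pcoord_prop)
  have mup: "is_partition mu" "sum_list mu = k" using mu unfolding partitions_def by auto
  have padmu: "pad_ones mu r \<in> partitions n"
    using partition_pad[OF mup(1)] mup(2) kn unfolding partitions_def pad_ones_def r_def by (auto simp: sum_list_replicate)
  define g where "g = (\<lambda>tau. a tau * (of_nat (Lcoef tau (pad_ones mu r)) :: qa))"
  have fpad: "f (pad_ones mu r) = (\<Sum>tau\<in>partitions n. g tau)"
    using PP padmu unfolding PProp_def g_def by blast
  define pd where "pd = (\<lambda>nu. pad_ones nu r)"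
  have inj: "inj_on pd (partitions k)" unfolding pd_def pad_ones_def inj_on_def by simp
  have imsub: "pd ` partitions k \<subseteq> partitions n"
    using partition_pad kn unfolding pd_def partitions_def pad_ones_def r_def by auto
  have zero: "g tau = 0" if tau: "tau \<in> partitions n - pd ` partitions k" for tau
  proof (cases "r \<le> count_list tau 1")
    case True
    define nu where "nu = take (length tau - r) tau"
    have tp: "is_partition tau" "sum_list tau = n" using tau unfolding partitions_def by auto
    have dr: "drop (length tau - r) tau = replicate r 1" by (rule drop_ones[OF tp(1) True])
    have teq: "tau = nu @ replicate r 1" using dr unfolding nu_def by (metis append_take_drop_id)
    have "is_partition nu" using tp(1) unfolding nu_def is_partition_def
      by (auto simp: sorted_wrt_take dest: in_set_takeD)
    moreover have "sum_list nu = k" using tp(2) teq kn unfolding r_def by (simp add: sum_list_replicate)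
    ultimately have "nu \<in> partitions k" unfolding partitions_def by simp
    then have "tau \<in> pd ` partitions k" using teq unfolding pd_def pad_ones_def by auto
    then show ?thesis using tau by auto
  next
    case False
    have tp: "is_partition tau" using tau unfolding partitions_def by auto
    have "(\<Prod>i<r. count_list tau 1 - i) = 0"
      using False by (intro prod_zero) (auto intro!: bexI[of _ "count_list tau 1"])
    then have "Lcoef tau (pad_ones mu r) = 0" unfolding pad_ones_def using Lcoef_pad[OF tp] by simp
    then show ?thesis unfolding g_def by simp
  qed
  have "(\<Sum>tau\<in>partitions n. g tau) = (\<Sum>tau\<in>pd ` partitions k. g tau)"
    using zero imsub finite_partitions by (intro sum.mono_neutral_right) auto
  also have "\<dots> = (\<Sum>nu\<in>partitions k. g (pd nu))" by (rule sum.reindex[OF inj, unfolded comp_def])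
  also have "\<dots> = (\<Sum>nu\<in>partitions k. fact r * (of_nat (Lcoef nu mu) * of_nat ((r + mult nu 1) choose (mult nu 1))
        * a (pad_ones nu r)))"
  proof (rule sum.cong[OF refl])
    fix nu assume nu: "nu \<in> partitions k"
    have np: "is_partition nu" using nu unfolding partitions_def by auto
    have cnt: "count_list (pad_ones nu r) 1 = mult nu 1 + r"
      unfolding pad_ones_def mult_def by (simp add: count_list_append)
    have tk: "take (length (pad_ones nu r) - r) (pad_ones nu r) = nu" unfolding pad_ones_def by simp
    have "Lcoef (pad_ones nu r) (pad_ones mu r) = (\<Prod>i<r. mult nu 1 + r - i) * Lcoef nu mu"
      using Lcoef_pad[OF partition_pad[OF np, of r], where mu=mu and r=r] unfolding cnt tk by (simp add: pad_ones_def)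
    also have "\<dots> = fact r * ((mult nu 1 + r) choose r) * Lcoef nu mu" by (simp add: prod_choose)
    also have "(mult nu 1 + r) choose r = (r + mult nu 1) choose (mult nu 1)"
      by (metis add.commute binomial_symmetric le_add2 add_diff_cancel_right')
    finally have "Lcoef (pad_ones nu r) (pad_ones mu r) = fact r * ((r + mult nu 1) choose (mult nu 1)) * Lcoef nu mu" .
    then show "g (pd nu) = fact r * (of_nat (Lcoef nu mu) * of_nat ((r + mult nu 1) choose (mult nu 1))
        * a (pad_ones nu r))" unfolding g_def pd_def by (simp add: algebra_simps)
  qed
  also have "\<dots> = fact r * (\<Sum>nu\<in>partitions k. of_nat (Lcoef nu mu) * of_nat ((r + mult nu 1) choose (mult nu 1))
        * a (pad_ones nu r))" by (simp add: sum_distrib_left)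
  finally have fp: "f (pad_ones mu r) = fact r * (\<Sum>nu\<in>partitions k. of_nat (Lcoef nu mu) * of_nat ((r + mult nu 1) choose (mult nu 1))
        * a (pad_ones nu r))" using fpad by simp
  have "Ko mu la = f (pad_ones mu r) / fact r"
    using kn mup unfolding Ko_def Let_def n_def r_def f_def by simp
  also have "\<dots> = (\<Sum>nu\<in>partitions k. of_nat (Lcoef nu mu) * of_nat ((r + mult nu 1) choose (mult nu 1))
        * a (pad_ones nu r))" using fp by simp
  also have "\<dots> = (\<Sum>nu\<in>partitions k. of_nat (Lcoef nu mu) / of_nat (zee nu) * Ch nu la)"
  proof (rule sum.cong[OF refl])
    fix nu assume nu: "nu \<in> partitions k"
    have np: "is_partition nu" "sum_list nu = k" using nu unfolding partitions_def by auto
    have z: "(of_nat (zee nu) :: qa) \<noteq> 0" using zee_nz[OF np(1)] by simp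
    have "Ch nu la = of_nat ((r + mult nu 1) choose (mult nu 1)) * of_nat (zee nu) * a (pad_ones nu r)"
      using np kn unfolding Ch_def Let_def theta_def a_def f_def r_def n_def by simp
    then show "of_nat (Lcoef nu mu) * of_nat ((r + mult nu 1) choose (mult nu 1)) * a (pad_ones nu r)
        = of_nat (Lcoef nu mu) / of_nat (zee nu) * Ch nu la" using z by (simp add: field_simps)
  qed
  finally show ?thesis .
qed


definition msm :: "qa \<Rightarrow> mpoly \<Rightarrow> mpoly" where
  "msm c p = Poly_Mapping.mapp (\<lambda>_ v. c * v) p"

lemma lookup_msm: "Poly_Mapping.lookup (msm c p) m = c * Poly_Mapping.lookup p m"
  unfolding msm_def lookup_mapp by (auto simp: when_def in_keys_iff)

lemma keys_msm: "Poly_Mapping.keys (msm c p) \<subseteq> Poly_Mapping.keys p"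
  unfolding msm_def by (rule keys_mapp_subset)

definition mmono :: "(nat \<Rightarrow>\<^sub>0 nat) \<Rightarrow> (nat \<Rightarrow> qa) \<Rightarrow> qa" where
  "mmono m x = (\<Prod>i\<in>Poly_Mapping.keys m. x i ^ Poly_Mapping.lookup m i)"

lemma meval_alt:
  assumes "finite K" "Poly_Mapping.keys p \<subseteq> K"
  shows "meval p x = (\<Sum>m\<in>K. Poly_Mapping.lookup p m * mmono m x)"
  unfolding meval_def mmono_def
  by (rule sum.mono_neutral_left) (use assms in \<open>auto simp: in_keys_iff\<close>)

lemma meval_add: "meval (p + q) x = meval p x + meval q x"
proof -
  define K where "K = Poly_Mapping.keys p \<union> Poly_Mapping.keys q"
  have fK: "finite K" unfolding K_def by auto
  have "meval (p + q) x = (\<Sum>m\<in>K. Poly_Mapping.lookup (p + q) m * mmono m x)"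
    by (rule meval_alt[OF fK]) (use keys_add[of p q] in \<open>auto simp: K_def\<close>)
  also have "\<dots> = (\<Sum>m\<in>K. Poly_Mapping.lookup p m * mmono m x) + (\<Sum>m\<in>K. Poly_Mapping.lookup q m * mmono m x)"
    by (simp add: lookup_add distrib_right sum.distrib)
  also have "\<dots> = meval p x + meval q x"
    using meval_alt[OF fK, of p x] meval_alt[OF fK, of q x] unfolding K_def by auto
  finally show ?thesis .
qed

lemma meval_msm: "meval (msm c p) x = c * meval p x"
proof -
  have fK: "finite (Poly_Mapping.keys p)" by auto
  have "meval (msm c p) x = (\<Sum>m\<in>Poly_Mapping.keys p. Poly_Mapping.lookup (msm c p) m * mmono m x)"
    by (rule meval_alt[OF fK keys_msm])
  also have "\<dots> = c * (\<Sum>m\<in>Poly_Mapping.keys p. Poly_Mapping.lookup p m * mmono m x)"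
    by (simp add: lookup_msm sum_distrib_left mult.assoc)
  also have "\<dots> = c * meval p x" using meval_alt[OF fK, of p x] by simp
  finally show ?thesis .
qed

lemma meval_zero: "meval 0 x = 0"
  unfolding meval_def by simp

lemma mvars_add: "mvars (p + q) \<subseteq> mvars p \<union> mvars q"
  unfolding mvars_def using keys_add[of p q] by auto

lemma mvars_msm: "mvars (msm c p) \<subseteq> mvars p"
  unfolding mvars_def using keys_msm[of c p] by auto

lemma mtotdeg_le: "mtotdeg p \<le> d \<longleftrightarrow>
   (\<forall>m\<in>Poly_Mapping.keys p. sum (Poly_Mapping.lookup m) (Poly_Mapping.keys m) \<le> d)"
  unfolding mtotdeg_def by (subst Max_le_iff) auto

lemma mtotdeg_add: "mtotdeg p \<le> d \<Longrightarrow> mtotdeg q \<le> d \<Longrightarrow> mtotdeg (p + q) \<le> d"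
  unfolding mtotdeg_le using keys_add[of p q] by blast

lemma mtotdeg_msm: "mtotdeg p \<le> d \<Longrightarrow> mtotdeg (msm c p) \<le> d"
  unfolding mtotdeg_le using keys_msm[of c p] by blast

lemma ass_D:
  assumes "alpha_shifted_symmetric F"
  shows "\<And>N. 1 \<le> N \<Longrightarrow> mvars (F N) \<subseteq> {1..N}"
    and "\<And>N. 1 \<le> N \<Longrightarrow> shifted_sym_poly N (F N)"
    and "\<And>N x. 1 \<le> N \<Longrightarrow> meval (F (Suc N)) (x(Suc N := 0)) = meval (F N) x"
    and "\<exists>d. \<forall>N\<ge>1. mtotdeg (F N) \<le> d"
  using assms unfolding alpha_shifted_symmetric_def by blast+

lemma ass_I:
  assumes "\<And>N. 1 \<le> N \<Longrightarrow> mvars (F N) \<subseteq> {1..N}"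
    and "\<And>N. 1 \<le> N \<Longrightarrow> shifted_sym_poly N (F N)"
    and "\<And>N x. 1 \<le> N \<Longrightarrow> meval (F (Suc N)) (x(Suc N := 0)) = meval (F N) x"
    and "\<And>N. 1 \<le> N \<Longrightarrow> mtotdeg (F N) \<le> d"
  shows "alpha_shifted_symmetric F"
  unfolding alpha_shifted_symmetric_def using assms by blast

lemma ass_add:
  assumes F: "alpha_shifted_symmetric F" and G: "alpha_shifted_symmetric G"
  shows "alpha_shifted_symmetric (\<lambda>N. F N + G N)"
proof -
  obtain d1 where d1: "\<forall>N\<ge>1. mtotdeg (F N) \<le> d1" using ass_D(4)[OF F] by blast
  obtain d2 where d2: "\<forall>N\<ge>1. mtotdeg (G N) \<le> d2" using ass_D(4)[OF G] by blast
  show ?thesis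
  proof (rule ass_I[where d="max d1 d2"])
    fix N :: nat assume N: "1 \<le> N"
    show "mtotdeg (F N + G N) \<le> max d1 d2"
    proof (rule mtotdeg_add)
      show "mtotdeg (F N) \<le> max d1 d2" using d1 N by (metis max.coboundedI1)
      show "mtotdeg (G N) \<le> max d1 d2" using d2 N by (metis max.coboundedI2)
    qed
    show "mvars (F N + G N) \<subseteq> {1..N}"
      using mvars_add[of "F N" "G N"] ass_D(1)[OF F N] ass_D(1)[OF G N] by blast
    show "shifted_sym_poly N (F N + G N)"
      unfolding shifted_sym_poly_def meval_add
    proof (intro allI impI)
      fix s y assume s: "s permutes {1..N}"
      have h1: "meval (F N) (\<lambda>i. y i + of_nat i / alpha) = meval (F N) (\<lambda>i. y (s i) + of_nat i / alpha)"
        using ass_D(2)[OF F N] s unfolding shifted_sym_poly_def by blast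
      have h2: "meval (G N) (\<lambda>i. y i + of_nat i / alpha) = meval (G N) (\<lambda>i. y (s i) + of_nat i / alpha)"
        using ass_D(2)[OF G N] s unfolding shifted_sym_poly_def by blast
      show "meval (F N) (\<lambda>i. y i + of_nat i / alpha) + meval (G N) (\<lambda>i. y i + of_nat i / alpha) =
            meval (F N) (\<lambda>i. y (s i) + of_nat i / alpha) + meval (G N) (\<lambda>i. y (s i) + of_nat i / alpha)"
        using h1 h2 by (rule arg_cong2[where f="(+)"])
    qed
    fix x
    show "meval (F (Suc N) + G (Suc N)) (x(Suc N := 0)) = meval (F N + G N) x"
      unfolding meval_add using ass_D(3)[OF F N] ass_D(3)[OF G N] by simp
  qed
qed

lemma ass_msm:
  assumes F: "alpha_shifted_symmetric F"
  shows "alpha_shifted_symmetric (\<lambda>N. msm c (F N))"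
proof -
  obtain d1 where d1: "\<forall>N\<ge>1. mtotdeg (F N) \<le> d1" using ass_D(4)[OF F] by blast
  show ?thesis
  proof (rule ass_I[where d=d1])
    fix N :: nat assume N: "1 \<le> N"
    show "mtotdeg (msm c (F N)) \<le> d1" using d1 N by (simp add: mtotdeg_msm)
    show "mvars (msm c (F N)) \<subseteq> {1..N}"
      using mvars_msm[of c "F N"] ass_D(1)[OF F N] by blast
    show "shifted_sym_poly N (msm c (F N))"
      unfolding shifted_sym_poly_def meval_msm
    proof (intro allI impI)
      fix s y assume s: "s permutes {1..N}"
      have h1: "meval (F N) (\<lambda>i. y i + of_nat i / alpha) = meval (F N) (\<lambda>i. y (s i) + of_nat i / alpha)"
        using ass_D(2)[OF F N] s unfolding shifted_sym_poly_def by blast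
      then show "c * meval (F N) (\<lambda>i. y i + of_nat i / alpha) = c * meval (F N) (\<lambda>i. y (s i) + of_nat i / alpha)"
        by (rule arg_cong)
    qed
    fix x
    show "meval (msm c (F (Suc N))) (x(Suc N := 0)) = meval (msm c (F N)) x"
      unfolding meval_msm using ass_D(3)[OF F N] by simp
  qed
qed

lemma ass_zero: "alpha_shifted_symmetric (\<lambda>N. 0)"
proof (rule ass_I[where d=0])
  fix N :: nat
  show "mvars 0 \<subseteq> {1..N}" unfolding mvars_def by simp
  show "shifted_sym_poly N 0" unfolding shifted_sym_poly_def meval_zero by simp
  show "mtotdeg 0 \<le> 0" unfolding mtotdeg_le by simp
  fix x show "meval 0 (x(Suc N := 0)) = meval 0 x" unfolding meval_zero ..
qed

lemma fn_zero: "is_alpha_shifted_symmetric_fn (\<lambda>_. 0)"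
  unfolding is_alpha_shifted_symmetric_fn_def
  by (rule exI[of _ "\<lambda>N. 0"]) (simp add: ass_zero eval_diagram_def meval_zero)

lemma fn_add:
  assumes "is_alpha_shifted_symmetric_fn g" "is_alpha_shifted_symmetric_fn h"
  shows "is_alpha_shifted_symmetric_fn (\<lambda>la. g la + h la)"
proof -
  obtain F where F: "alpha_shifted_symmetric F" "\<And>la. is_partition la \<Longrightarrow> g la = eval_diagram F la"
    using assms(1) unfolding is_alpha_shifted_symmetric_fn_def by blast
  obtain G where G: "alpha_shifted_symmetric G" "\<And>la. is_partition la \<Longrightarrow> h la = eval_diagram G la"
    using assms(2) unfolding is_alpha_shifted_symmetric_fn_def by blast
  show ?thesis unfolding is_alpha_shifted_symmetric_fn_def
    by (rule exI[of _ "\<lambda>N. F N + G N"]) (use F G ass_add in \<open>simp add: eval_diagram_def meval_add\<close>)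
qed

lemma fn_msm:
  assumes "is_alpha_shifted_symmetric_fn g"
  shows "is_alpha_shifted_symmetric_fn (\<lambda>la. c * g la)"
proof -
  obtain F where F: "alpha_shifted_symmetric F" "\<And>la. is_partition la \<Longrightarrow> g la = eval_diagram F la"
    using assms(1) unfolding is_alpha_shifted_symmetric_fn_def by blast
  show ?thesis unfolding is_alpha_shifted_symmetric_fn_def
    by (rule exI[of _ "\<lambda>N. msm c (F N)"]) (use F ass_msm in \<open>simp add: eval_diagram_def meval_msm\<close>)
qed

lemma fn_sum:
  assumes "finite A" "\<And>x. x \<in> A \<Longrightarrow> is_alpha_shifted_symmetric_fn (g x)"
  shows "is_alpha_shifted_symmetric_fn (\<lambda>la. \<Sum>x\<in>A. g x la)"
  using assms
proof (induction A rule: finite_induct)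
  case empty then show ?case using fn_zero by simp
next
  case (insert a A)
  have "is_alpha_shifted_symmetric_fn (\<lambda>la. g a la + (\<Sum>x\<in>A. g x la))"
    using insert by (intro fn_add) auto
  then show ?case using insert by simp
qed

lemma fn_cong:
  assumes "is_alpha_shifted_symmetric_fn g" "\<And>la. is_partition la \<Longrightarrow> g la = h la"
  shows "is_alpha_shifted_symmetric_fn h"
proof -
  obtain F where F: "alpha_shifted_symmetric F" "\<And>la. is_partition la \<Longrightarrow> g la = eval_diagram F la"
    using assms(1) unfolding is_alpha_shifted_symmetric_fn_def by blast
  have "\<forall>la. is_partition la \<longrightarrow> h la = eval_diagram F la" using F(2) assms(2) by simp
  then show ?thesis unfolding is_alpha_shifted_symmetric_fn_def using F(1) by blast
qed


theorem proposition2p3: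
  fixes mu :: "nat list" and k :: nat
  assumes "mu \<in> partitions k"
    and known_Ch: "\<And>nu. is_partition nu \<Longrightarrow> is_alpha_shifted_symmetric_fn (Ch nu)"
  shows "(\<forall>la. is_partition la \<longrightarrow>
            Ko mu la = (\<Sum>nu\<in>partitions k. of_nat (Lcoef nu mu) / of_nat (zee nu) * Ch nu la))
         \<and> is_alpha_shifted_symmetric_fn (Ko mu)"
proof -
  have id: "\<forall>la. is_partition la \<longrightarrow>
            Ko mu la = (\<Sum>nu\<in>partitions k. of_nat (Lcoef nu mu) / of_nat (zee nu) * Ch nu la)"
    using Ko_identity[OF assms(1)] by blast
  moreover have "is_alpha_shifted_symmetric_fn (Ko mu)"
  proof (rule fn_cong)
    show "is_alpha_shifted_symmetric_fn
       (\<lambda>la. \<Sum>nu\<in>partitions k. of_nat (Lcoef nu mu) / of_nat (zee nu) * Ch nu la)"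
    proof (rule fn_sum[OF finite_partitions])
      fix nu assume "nu \<in> partitions k"
      then have "is_partition nu" unfolding partitions_def by simp
      then show "is_alpha_shifted_symmetric_fn (\<lambda>la. of_nat (Lcoef nu mu) / of_nat (zee nu) * Ch nu la)"
        by (intro fn_msm known_Ch)
    qed
    show "\<And>la. is_partition la \<Longrightarrow>
       (\<Sum>nu\<in>partitions k. of_nat (Lcoef nu mu) / of_nat (zee nu) * Ch nu la) = Ko mu la"
      using id by simp
  qed
  ultimately show ?thesis by blast
qed

end
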